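(* Let $X$ be a set, $T:X\to X$ a map, and $G$ a finite group acting on $X$ such that $g\circ T=T\circ g$ for all $g\in G$. Let $H\leqslant G$ and let $x\in X_{[H]}$ be a periodic point of $T$. Then there exists $k\in\Delta(N_G(H)/H)$ such that (i) $\mathfrak{O}_T(x)$ shortens in length by a factor of $\frac1k$, and (ii) $\mathfrak{O}_T(x)$ glues to $\frac{[G:H]}{k}$ orbits (including itself).
   Context: For $x\in X$, $\mathfrak{O}_T(x)=\{T^j(x):j\geqslant0\}$ and $\mathfrak{O}_G(x)=\{g(x):g\in G\}$. $G_x=\{g\in G:g(x)=x\}$ is the stabilizer of $x$; $N_G(H)=\{g\in G: gHg^{-1}=H\}$ is the normalizer; $[H]=\{gHg^{-1}:g\in G\}$ is the conjugacy class of $H$; $X_{[H]}=\{x\in X: G_x\in[H]\}$. For a finite group $K$, $\Delta(K)=\{|\langle h\rangle|: h\in K\}$ is the set of orders of elements of $K$. Let $X'=G\backslash X$, $\pi(x)=\mathfrak{O}_G(x)$, and $T'(\mathfrak{O}_G(x))=\mathfrak{O}_G(T(x))$ the induced map. "$\mathfrak{O}_T(x)$ shortens in length by a factor of $\frac1k$" means $|\mathfrak{O}_{T'}(\pi(x))|=\frac1k|\mathfrak{O}_T(x)|$. "$\mathfrak{O}_T(x)$ glues to $m$ orbits (including itself)" means there are exactly $m$ distinct closed $T$-orbits $\mathfrak{O}_T(y)$ with $\pi(\mathfrak{O}_T(y))=\pi(\mathfrak{O}_T(x))$. *)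

theory Defs
  imports "HOL-Algebra.Algebra"
begin

definition T_orbit :: "('a \<Rightarrow> 'a) \<Rightarrow> 'a \<Rightarrow> 'a set" where
  "T_orbit T x = {(T ^^ j) x | j. True}"

definition periodic_pt :: "('a \<Rightarrow> 'a) \<Rightarrow> 'a \<Rightarrow> bool" where
  "periodic_pt T x \<longleftrightarrow> (\<exists>n>0. (T ^^ n) x = x)"

definition Delta :: "('b, 'c) monoid_scheme \<Rightarrow> nat set" where
  "Delta K = {group.ord K h | h. h \<in> carrier K}"

text \<open>The quotient map pi(x) = O_G(x) and the induced map T' on G-orbits:
  T'(O_G(y)) = O_G(T y) for y in X (well defined when T commutes with the action).\<close>
definition induced_map :: "('g, 'm) monoid_scheme \<Rightarrow> ('g \<Rightarrow> 'a \<Rightarrow> 'a) \<Rightarrow> 'a set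
    \<Rightarrow> ('a \<Rightarrow> 'a) \<Rightarrow> 'a set \<Rightarrow> 'a set" where
  "induced_map Gr \<phi> S T Ob = orbit Gr \<phi> (T (SOME y. y \<in> S \<and> Ob = orbit Gr \<phi> y))"

end

theory Submission imports Defs begin
lemma (in group) canc1: "x \<in> carrier G \<Longrightarrow> y \<in> carrier G \<Longrightarrow> x \<otimes> (inv x \<otimes> y) = y"
  by (simp add: m_assoc[symmetric])
lemma (in group) canc2: "x \<in> carrier G \<Longrightarrow> y \<in> carrier G \<Longrightarrow> inv x \<otimes> (x \<otimes> y) = y"
  by (simp add: m_assoc[symmetric])
lemma (in group) conj_pow:
  assumes a: "a \<in> carrier G" and g: "g \<in> carrier G"
  shows "(inv g \<otimes> a \<otimes> g) [^] (j::nat) = inv g \<otimes> a [^] j \<otimes> g"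
proof (induction j)
  case 0 then show ?case using g by (simp add: m_assoc)
next
  case (Suc j)
  have "(inv g \<otimes> a \<otimes> g) [^] Suc j = (inv g \<otimes> a [^] j \<otimes> g) \<otimes> (inv g \<otimes> a \<otimes> g)"
    using Suc by simp
  also have "\<dots> = inv g \<otimes> (a [^] j \<otimes> a) \<otimes> g" using a g by (simp add: m_assoc canc1)
  finally show ?case by (simp add: nat_pow_Suc)
qed
lemma (in group) conj_conj:
  assumes a: "a \<in> carrier G" and g: "g \<in> carrier G" and y: "y \<in> carrier G"
  shows "g \<otimes> ((inv g \<otimes> a \<otimes> g) \<otimes> y \<otimes> inv (inv g \<otimes> a \<otimes> g)) \<otimes> inv g = a \<otimes> (g \<otimes> y \<otimes> inv g) \<otimes> inv a"
  using a g y by (simp add: m_assoc canc1 canc2 inv_mult_group)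
lemma (in group) conj_back:
  assumes a: "a \<in> carrier G" and z: "z \<in> carrier G"
  shows "inv a \<otimes> (a \<otimes> z \<otimes> inv a) \<otimes> a = z"
  using a z by (simp add: m_assoc canc1 canc2)
lemma (in group) conj_back2:
  assumes a: "a \<in> carrier G" and z: "z \<in> carrier G"
  shows "a \<otimes> (inv a \<otimes> z \<otimes> a) \<otimes> inv a = z"
  using a z by (simp add: m_assoc canc1 canc2)
lemma (in group) conj_pow2:
  assumes a: "a \<in> carrier G" and g: "g \<in> carrier G"
  shows "g \<otimes> (inv g \<otimes> a \<otimes> g) \<otimes> inv g = a"
  using a g by (simp add: m_assoc canc1 canc2)

lemma fpa: "(T^^a) ((T^^b) z) = (T^^(a+b)) z" by (simp add: funpow_add)

lemma funpow_mult_fix: "(T^^n) x = x \<Longrightarrow> (T^^(n*q)) x = x"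
proof (induction q)
  case 0 then show ?case by simp
next
  case (Suc q)
  have "(T^^(n*Suc q)) x = (T^^n) ((T^^(n*q)) x)" by (simp add: funpow_add)
  then show ?case using Suc by simp
qed

lemma funpow_mod: "(T^^n) x = x \<Longrightarrow> (T^^j) x = (T^^(j mod n)) x"
proof -
  assume h: "(T^^n) x = x"
  have "(T^^(j mod n + n*(j div n))) x = (T^^(j mod n)) x"
    by (simp only: funpow_add o_apply funpow_mult_fix[OF h])
  moreover have "j mod n + n*(j div n) = j" by simp
  ultimately show "(T^^j) x = (T^^(j mod n)) x" by metis
qed

lemma funpow_cancel:
  assumes "n > 0" "(T^^n) u = u" "(T^^n) v = v" "(T^^i) u = (T^^i) v"
  shows "u = v"
proof -
  have ge: "n*i \<ge> i" using assms(1) by simp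
  have "\<And>w. (T^^n) w = w \<Longrightarrow> w = (T^^(n*i - i)) ((T^^i) w)"
  proof -
    fix w assume "(T^^n) w = w"
    hence "w = (T^^(n*i)) w" using funpow_mult_fix by metis
    also have "\<dots> = (T^^(n*i - i + i)) w" using ge by simp
    also have "\<dots> = (T^^(n*i - i)) ((T^^i) w)" by (simp add: funpow_add)
    finally show "w = (T^^(n*i - i)) ((T^^i) w)" .
  qed
  then show ?thesis using assms by metis
qed

lemma T_orbit_shift:
  assumes "n > 0" "(T^^n) z = z"
  shows "T_orbit T ((T^^j) z) = T_orbit T z"
proof
  show "T_orbit T ((T^^j) z) \<subseteq> T_orbit T z"
    unfolding T_orbit_def by (auto simp: fpa) 
next
  show "T_orbit T z \<subseteq> T_orbit T ((T^^j) z)"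
  proof
    fix w assume "w \<in> T_orbit T z"
    then obtain a where w: "w = (T^^a) z" unfolding T_orbit_def by auto
    have "w = (T^^a) ((T^^(n*j)) z)" using w funpow_mult_fix[OF assms(2)] by simp
    also have "\<dots> = (T^^(a + n*j - j + j)) z"
    proof -
      have "j \<le> n*j" using assms(1) by simp
      hence "a + n*j - j + j = a + n*j" by linarith
      thus ?thesis by (simp add: fpa)
    qed
    also have "\<dots> = (T^^(a + n*j - j)) ((T^^j) z)" by (simp add: funpow_add)
    finally show "w \<in> T_orbit T ((T^^j) z)" unfolding T_orbit_def by blast
  qed
qed

lemma period_inj:
  assumes per: "periodic_pt T x" and nd: "n = (LEAST n. n > 0 \<and> (T^^n) x = x)"
  shows "n > 0" "(T^^n) x = x" "(T^^i) x = (T^^j) x \<longleftrightarrow> i mod n = j mod n"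
proof -
  have ex: "\<exists>n. n > 0 \<and> (T^^n) x = x" using per unfolding periodic_pt_def by blast
  show n: "n > 0" "(T^^n) x = x" using LeastI_ex[OF ex] nd by auto
  have key: "(T^^i) x = (T^^j) x \<Longrightarrow> i \<le> j \<Longrightarrow> i mod n = j mod n" for i j
  proof -
    assume e: "(T^^i) x = (T^^j) x" and ij: "i \<le> j"
    have c1: "(T^^i) ((T^^(j-i)) x) = (T^^i) x" using e ij
      by (simp add: fpa)
    have c2: "(T^^n) ((T^^(j-i)) x) = (T^^(j-i)) x"
      using n(2) by (metis fpa add.commute)
    from c2 c1 have d: "(T^^(j-i)) x = x" by (rule funpow_cancel[OF n(1) _ n(2)])
    have "(T^^((j-i) mod n)) x = x" using funpow_mod[OF n(2), of "j-i"] d by simp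
    moreover have "(j-i) mod n < n" using n(1) by simp
    ultimately have "(j-i) mod n = 0"
    proof -
      assume a1: "(T^^((j-i) mod n)) x = x" and a2: "(j-i) mod n < n"
      show "(j-i) mod n = 0"
      proof (rule ccontr)
        assume "(j-i) mod n \<noteq> 0"
        hence "0 < (j-i) mod n \<and> (T^^((j-i) mod n)) x = x" using a1 by simp
        hence "n \<le> (j-i) mod n" unfolding nd by (rule Least_le)
        thus False using a2 by simp
      qed
    qed
    then show ?thesis using ij mod_eq_dvd_iff_nat[OF ij, of n] by (simp add: mod_0_imp_dvd)
  qed
  show "(T^^i) x = (T^^j) x \<longleftrightarrow> i mod n = j mod n"
  proof
    assume "(T^^i) x = (T^^j) x" then show "i mod n = j mod n"
    proof (cases "i \<le> j")
      case True then show ?thesis using key[of i j] \<open>(T^^i) x = (T^^j) x\<close> by blast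
    next
      case False then have "j \<le> i" by simp
      then show ?thesis using key[of j i] \<open>(T^^i) x = (T^^j) x\<close> by simp
    qed
  next
    assume "i mod n = j mod n" then show "(T^^i) x = (T^^j) x"
      using funpow_mod[OF n(2), of i] funpow_mod[OF n(2), of j] by simp
  qed
qed

theorem lemma6:
  fixes G :: "('g, 'm) monoid_scheme" and E :: "'a set" and \<phi> :: "'g \<Rightarrow> 'a \<Rightarrow> 'a"
    and T :: "'a \<Rightarrow> 'a" and H :: "'g set" and x :: 'a
  assumes act: "group_action G E \<phi>"
    and fin: "finite (carrier G)"
    and T_maps: "\<forall>y\<in>E. T y \<in> E"
    and comm: "\<forall>g\<in>carrier G. \<forall>y\<in>E. \<phi> g (T y) = T (\<phi> g y)"
    and H: "subgroup H G"
    and x: "x \<in> E"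
    and stab: "\<exists>g\<in>carrier G. stabilizer G \<phi> x = g <#\<^bsub>G\<^esub> H #>\<^bsub>G\<^esub> inv\<^bsub>G\<^esub> g"
    and per: "periodic_pt T x"
  shows "\<exists>k \<in> Delta ((G\<lparr>carrier := normalizer G H\<rparr>) Mod H).
           card (T_orbit T x) = k * card (T_orbit (induced_map G \<phi> E T) (orbit G \<phi> x))
         \<and> card {Ob. \<exists>y\<in>E. periodic_pt T y \<and> Ob = T_orbit T y
                       \<and> orbit G \<phi> ` Ob = orbit G \<phi> ` T_orbit T x}
             * k = card (rcosets\<^bsub>G\<^esub> H)"
proof -
  interpret A: group_action G E \<phi> by (rule act)
  interpret G: group G using A.group_hom group_hom.axioms(1) by blast
  have phiE: "\<And>c y. c \<in> carrier G \<Longrightarrow> y \<in> E \<Longrightarrow> \<phi> c y \<in> E"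
    using A.element_image by blast
  have comp: "\<And>c d y. c \<in> carrier G \<Longrightarrow> d \<in> carrier G \<Longrightarrow> y \<in> E \<Longrightarrow> \<phi> (c \<otimes>\<^bsub>G\<^esub> d) y = \<phi> c (\<phi> d y)"
    using A.composition_rule by blast
  have invact: "\<And>c y. c \<in> carrier G \<Longrightarrow> y \<in> E \<Longrightarrow> \<phi> (inv\<^bsub>G\<^esub> c) (\<phi> c y) = y"
    using A.orbit_sym_aux by blast
  have TjE: "\<And>y. y \<in> E \<Longrightarrow> (T^^j) y \<in> E" for j
    by (induction j) (auto simp: T_maps)
  have commj: "\<And>c y. c \<in> carrier G \<Longrightarrow> y \<in> E \<Longrightarrow> \<phi> c ((T^^j) y) = (T^^j) (\<phi> c y)" for j
    by (induction j) (auto simp: comm TjE)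
  have orbit_eq: "\<And>c y. y \<in> E \<Longrightarrow> c \<in> carrier G \<Longrightarrow> orbit G \<phi> (\<phi> c y) = orbit G \<phi> y"
  proof -
    fix c y assume y: "y \<in> E" and c: "c \<in> carrier G"
    show "orbit G \<phi> (\<phi> c y) = orbit G \<phi> y"
    proof
      show "orbit G \<phi> (\<phi> c y) \<subseteq> orbit G \<phi> y"
      proof
        fix w assume "w \<in> orbit G \<phi> (\<phi> c y)"
        then obtain e where e: "e \<in> carrier G" "w = \<phi> e (\<phi> c y)" unfolding orbit_def by blast
        hence "w = \<phi> (e \<otimes>\<^bsub>G\<^esub> c) y" using comp[OF _ c y] by simp
        then show "w \<in> orbit G \<phi> y" unfolding orbit_def using e c by blast
      qed
      show "orbit G \<phi> y \<subseteq> orbit G \<phi> (\<phi> c y)"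
      proof
        fix w assume "w \<in> orbit G \<phi> y"
        then obtain e where e: "e \<in> carrier G" "w = \<phi> e y" unfolding orbit_def by blast
        have "\<phi> (e \<otimes>\<^bsub>G\<^esub> inv\<^bsub>G\<^esub> c) (\<phi> c y) = w"
          using e comp[of e "inv\<^bsub>G\<^esub> c" "\<phi> c y"] phiE[OF c y] invact[OF c y] c by simp
        then show "w \<in> orbit G \<phi> (\<phi> c y)" unfolding orbit_def using e c by blast
      qed
    qed
  qed
  have orbit_iff: "\<And>y z. y \<in> E \<Longrightarrow> z \<in> E \<Longrightarrow> (orbit G \<phi> z = orbit G \<phi> y \<longleftrightarrow> z \<in> orbit G \<phi> y)"
  proof -
    fix y z assume y: "y \<in> E" and z: "z \<in> E"
    show "(orbit G \<phi> z = orbit G \<phi> y \<longleftrightarrow> z \<in> orbit G \<phi> y)"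
    proof
      assume "orbit G \<phi> z = orbit G \<phi> y" then show "z \<in> orbit G \<phi> y"
        using A.orbit_refl[OF z] by simp
    next
      assume "z \<in> orbit G \<phi> y"
      then obtain c where "c \<in> carrier G" "z = \<phi> c y" unfolding orbit_def by blast
      then show "orbit G \<phi> z = orbit G \<phi> y" using orbit_eq y by simp
    qed
  qed
  define n where "n = (LEAST n. n > 0 \<and> (T^^n) x = x)"
  note pi = period_inj[OF per n_def]
  have xn: "(T^^n) x = x" by (rule pi(2))
  have cxn: "\<And>c. c \<in> carrier G \<Longrightarrow> (T^^n) (\<phi> c x) = \<phi> c x"
  proof -
    fix c assume c: "c \<in> carrier G"
    show "(T^^n) (\<phi> c x) = \<phi> c x" using commj[OF c x, of n] unfolding xn by (rule sym)
  qed
  have Tjn: "(T^^n) ((T^^j) x) = (T^^j) x" for j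
  proof -
    have "(T^^n) ((T^^j) x) = (T^^j) ((T^^n) x)" by (simp add: fpa add.commute)
    thus ?thesis using xn by simp
  qed
  have bk: "(T^^(n*j - j)) ((T^^j) x) = x" for j
  proof -
    have "j \<le> n*j" using pi(1) by simp
    hence "(T^^(n*j - j)) ((T^^j) x) = (T^^(n*j)) x" by (simp add: fpa)
    thus ?thesis using funpow_mult_fix[OF xn] by simp
  qed
  have stabj: "\<And>z. z \<in> carrier G \<Longrightarrow> \<phi> z ((T^^j) x) = (T^^j) x \<longleftrightarrow> \<phi> z x = x" for j
  proof -
    fix z assume z: "z \<in> carrier G"
    show "\<phi> z ((T^^j) x) = (T^^j) x \<longleftrightarrow> \<phi> z x = x"
    proof
      assume h: "\<phi> z ((T^^j) x) = (T^^j) x"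
      have "\<phi> z ((T^^(n*j - j)) ((T^^j) x)) = (T^^(n*j - j)) (\<phi> z ((T^^j) x))"
        using commj[OF z TjE[OF x]] by simp
      then show "\<phi> z x = x" using h bk by simp
    next
      assume "\<phi> z x = x" then show "\<phi> z ((T^^j) x) = (T^^j) x" using commj[OF z x] by simp
    qed
  qed
  define P where "P d \<longleftrightarrow> (T^^d) x \<in> orbit G \<phi> x" for d
  have P_add: "P a \<Longrightarrow> P b \<Longrightarrow> P (a+b)" for a b
  proof -
    assume "P a" "P b"
    then obtain c d where c: "c \<in> carrier G" "(T^^a) x = \<phi> c x" and d: "d \<in> carrier G" "(T^^b) x = \<phi> d x"
      unfolding P_def orbit_def by blast
    have "(T^^(a+b)) x = (T^^b) ((T^^a) x)" by (simp add: fpa add.commute)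
    also have "\<dots> = \<phi> c (\<phi> d x)" using c(2) d(2) commj[OF c(1) x, of b, symmetric] by simp
    also have "\<dots> = \<phi> (c \<otimes>\<^bsub>G\<^esub> d) x" using comp c d x by simp
    finally show "P (a+b)" unfolding P_def orbit_def using c d by blast
  qed
  have P_sub: "P a \<Longrightarrow> P (a+b) \<Longrightarrow> P b" for a b
  proof -
    assume "P a" "P (a+b)"
    then obtain c d where d: "d \<in> carrier G" "(T^^a) x = \<phi> d x" and c: "c \<in> carrier G" "(T^^(a+b)) x = \<phi> c x"
      unfolding P_def orbit_def by blast
    have "\<phi> d ((T^^b) x) = (T^^b) ((T^^a) x)" using d commj[OF d(1) x] by simp
    also have "\<dots> = \<phi> c x" using c by (simp add: fpa add.commute)
    finally have e: "\<phi> d ((T^^b) x) = \<phi> c x" .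
    have "(T^^b) x \<in> E" using TjE x by blast
    hence "(T^^b) x = \<phi> (inv\<^bsub>G\<^esub> d) (\<phi> c x)" using invact[OF d(1)] e by metis
    also have "\<dots> = \<phi> (inv\<^bsub>G\<^esub> d \<otimes>\<^bsub>G\<^esub> c) x" using comp c d x by simp
    finally show "P b" unfolding P_def orbit_def using c d by blast
  qed
  have P0: "P 0" unfolding P_def using A.orbit_refl[OF x] by simp
  have Pn: "P n" unfolding P_def using A.orbit_refl[OF x] xn by simp
  define m where "m = (LEAST m. m > 0 \<and> P m)"
  have m: "m > 0" "P m" using LeastI[of "\<lambda>m. m > 0 \<and> P m" n] pi(1) Pn m_def by auto
  have P_iff: "P d \<longleftrightarrow> m dvd d" for d
  proof
    assume Pd: "P d"
    have Pq: "P (m*q)" for q by (induction q) (auto simp: P0 P_add m(2) add.commute)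
    have "P (d mod m)" using P_sub[OF Pq[of "d div m"], of "d mod m"] Pd by simp
    moreover have "d mod m < m" using m(1) by simp
    ultimately have "d mod m = 0"
      using Least_le[of "\<lambda>m. m > 0 \<and> P m" "d mod m"] m_def by (metis le_less_trans less_irrefl neq0_conv)
    then show "m dvd d" by (simp add: mod_0_imp_dvd)
  next
    assume "m dvd d"
    then obtain q where "d = m*q" by blast
    moreover have "P (m*q)" by (induction q) (auto simp: P0 P_add m(2) add.commute)
    ultimately show "P d" by simp
  qed
  have mn: "m dvd n" using P_iff Pn by simp
  define k where "k = n div m"
  have nkm: "n = k * m" using mn k_def by simp
  have L: "i \<le> j \<Longrightarrow> (T^^j) x \<in> orbit G \<phi> ((T^^i) x) \<longleftrightarrow> P (j - i)" for i j
  proof -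
    assume ij: "i \<le> j"
    have split: "(T^^j) x = (T^^i) ((T^^(j-i)) x)" using ij by (simp add: fpa)
    show ?thesis
    proof
      assume "(T^^j) x \<in> orbit G \<phi> ((T^^i) x)"
      then obtain c where c: "c \<in> carrier G" "(T^^j) x = \<phi> c ((T^^i) x)" unfolding orbit_def by blast
      have "(T^^i) ((T^^(j-i)) x) = (T^^i) (\<phi> c x)" using split c commj[OF c(1) x] by simp
      hence "(T^^(j-i)) x = \<phi> c x" using funpow_cancel[OF pi(1) Tjn cxn[OF c(1)]] by blast
      then show "P (j-i)" unfolding P_def orbit_def using c by blast
    next
      assume "P (j-i)"
      then obtain c where c: "c \<in> carrier G" "(T^^(j-i)) x = \<phi> c x" unfolding P_def orbit_def by blast
      have "(T^^j) x = \<phi> c ((T^^i) x)" using split c commj[OF c(1) x] by simp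
      then show "(T^^j) x \<in> orbit G \<phi> ((T^^i) x)" unfolding orbit_def using c by blast
    qed
  qed
  have orbit_Tj: "orbit G \<phi> ((T^^i) x) = orbit G \<phi> ((T^^j) x) \<longleftrightarrow> i mod m = j mod m" for i j
  proof -
    have A: "orbit G \<phi> ((T^^j) x) = orbit G \<phi> ((T^^i) x) \<longleftrightarrow> j mod m = i mod m" if ij: "i \<le> j" for i j
      using orbit_iff[OF TjE[OF x] TjE[OF x]] L[OF ij] P_iff mod_eq_dvd_iff_nat[OF ij] by simp
    show ?thesis using A[of i j] A[of j i] by (cases "i \<le> j") auto
  qed
  have ind: "y \<in> E \<Longrightarrow> induced_map G \<phi> E T (orbit G \<phi> y) = orbit G \<phi> (T y)" for y
  proof -
    assume y: "y \<in> E"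
    define y' where "y' = (SOME y'. y' \<in> E \<and> orbit G \<phi> y = orbit G \<phi> y')"
    have y': "y' \<in> E \<and> orbit G \<phi> y = orbit G \<phi> y'"
      unfolding y'_def by (rule someI[of _ y]) (simp add: y)
    then have "y' \<in> orbit G \<phi> y" using A.orbit_refl by auto
    then obtain c where c: "c \<in> carrier G" "y' = \<phi> c y" unfolding orbit_def by blast
    have "orbit G \<phi> (T y') = orbit G \<phi> (T y)"
      using c comm orbit_eq[OF T_maps[rule_format, OF y] c(1)] y by simp
    then show ?thesis unfolding induced_map_def y'_def[symmetric] by simp
  qed
  have indj: "((induced_map G \<phi> E T)^^j) (orbit G \<phi> x) = orbit G \<phi> ((T^^j) x)" for j
    by (induction j) (auto simp: ind TjE x)
  have TO': "T_orbit (induced_map G \<phi> E T) (orbit G \<phi> x) = (\<lambda>j. orbit G \<phi> ((T^^j) x)) ` {..<m}"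
  proof -
    have "T_orbit (induced_map G \<phi> E T) (orbit G \<phi> x) = range (\<lambda>j. orbit G \<phi> ((T^^j) x))"
      unfolding T_orbit_def indj by auto
    also have "\<dots> = (\<lambda>j. orbit G \<phi> ((T^^j) x)) ` {..<m}"
    proof
      show "range (\<lambda>j. orbit G \<phi> ((T^^j) x)) \<subseteq> (\<lambda>j. orbit G \<phi> ((T^^j) x)) ` {..<m}"
      proof
        fix Ob assume "Ob \<in> range (\<lambda>j. orbit G \<phi> ((T^^j) x))"
        then obtain j where "Ob = orbit G \<phi> ((T^^j) x)" by blast
        moreover have "orbit G \<phi> ((T^^j) x) = orbit G \<phi> ((T^^(j mod m)) x)" using orbit_Tj by simp
        moreover have "j mod m < m" using m(1) by simp
        ultimately show "Ob \<in> (\<lambda>j. orbit G \<phi> ((T^^j) x)) ` {..<m}" by blast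
      qed
    qed auto
    finally show ?thesis .
  qed
  have cardTO': "card (T_orbit (induced_map G \<phi> E T) (orbit G \<phi> x)) = m"
    unfolding TO' by (subst card_image) (auto simp: inj_on_def orbit_Tj)
  have TO: "T_orbit T x = (\<lambda>j. (T^^j) x) ` {..<n}"
  proof
    show "T_orbit T x \<subseteq> (\<lambda>j. (T^^j) x) ` {..<n}"
    proof
      fix w assume "w \<in> T_orbit T x"
      then obtain j where "w = (T^^j) x" unfolding T_orbit_def by blast
      moreover have "(T^^j) x = (T^^(j mod n)) x" using pi(3) by simp
      moreover have "j mod n < n" using pi(1) by simp
      ultimately show "w \<in> (\<lambda>j. (T^^j) x) ` {..<n}" by blast
    qed
  qed (auto simp: T_orbit_def)
  have cardTO: "card (T_orbit T x) = n"
    unfolding TO by (subst card_image) (auto simp: inj_on_def pi(3))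
  have conj1: "card (T_orbit T x) = k * card (T_orbit (induced_map G \<phi> E T) (orbit G \<phi> x))"
    using cardTO cardTO' nkm by simp
  have Tor: "T_orbit T y = range (\<lambda>j. (T^^j) y)" for y unfolding T_orbit_def by auto
  define O' where "O' = orbit G \<phi> x"
  have finO': "finite O'" unfolding O'_def orbit_def using fin by (simp add: setcompr_eq_image)
  have O'E: "O' \<subseteq> E" unfolding O'_def orbit_def using phiE x by blast
  define S where "S = {Ob. \<exists>y\<in>E. periodic_pt T y \<and> Ob = T_orbit T y
                       \<and> orbit G \<phi> ` Ob = orbit G \<phi> ` T_orbit T x}"
  have O'mem: "w \<in> O' \<longleftrightarrow> (\<exists>c\<in>carrier G. w = \<phi> c x)" for w unfolding O'_def orbit_def by blast
  have S_eq: "S = T_orbit T ` O'"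
  proof
    show "T_orbit T ` O' \<subseteq> S"
    proof
      fix Ob assume "Ob \<in> T_orbit T ` O'"
      then obtain w where w: "w \<in> O'" "Ob = T_orbit T w" by (rule imageE) simp
      then obtain c where c: "c \<in> carrier G" "w = \<phi> c x" using O'mem by blast
      have r1: "orbit G \<phi> ` T_orbit T (\<phi> c x) = range (\<lambda>j. orbit G \<phi> (\<phi> c ((T^^j) x)))"
        unfolding Tor image_image using commj[OF c(1) x] by simp
      have r2: "orbit G \<phi> (\<phi> c ((T^^j) x)) = orbit G \<phi> ((T^^j) x)" for j
        using orbit_eq[OF TjE[OF x] c(1)] by simp
      have r3: "orbit G \<phi> ` T_orbit T x = range (\<lambda>j. orbit G \<phi> ((T^^j) x))"
        unfolding Tor image_image by simp
      have im: "orbit G \<phi> ` Ob = orbit G \<phi> ` T_orbit T x" unfolding w(2) c(2) r1 r3 r2 by simp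
      have pp: "periodic_pt T (\<phi> c x)" unfolding periodic_pt_def using cxn[OF c(1)] pi(1) by blast
      have "\<phi> c x \<in> E" using phiE[OF c(1) x] .
      then show "Ob \<in> S" unfolding S_def using pp im w(2) c(2) by blast
    qed
  next
    show "S \<subseteq> T_orbit T ` O'"
    proof
      fix Ob assume "Ob \<in> S"
      then obtain y where y: "y \<in> E" "Ob = T_orbit T y" "orbit G \<phi> ` Ob = orbit G \<phi> ` T_orbit T x"
        unfolding S_def by blast
      have "y = (T^^0) y" by simp
      then have "y \<in> Ob" unfolding y(2) T_orbit_def by blast
      then have "orbit G \<phi> y \<in> orbit G \<phi> ` T_orbit T x" using y(3) by blast
      then obtain j where j: "orbit G \<phi> y = orbit G \<phi> ((T^^j) x)" unfolding Tor by blast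
      have "y \<in> orbit G \<phi> ((T^^j) x)" using j A.orbit_refl[OF y(1)] by simp
      then obtain c where c: "c \<in> carrier G" "y = \<phi> c ((T^^j) x)" unfolding orbit_def by blast
      have "y = (T^^j) (\<phi> c x)" using c commj[OF c(1) x] by simp
      then have "Ob = T_orbit T (\<phi> c x)" using y(2) T_orbit_shift[OF pi(1) cxn[OF c(1)]] by simp
      moreover have "\<phi> c x \<in> O'" using O'mem c by blast
      ultimately show "Ob \<in> T_orbit T ` O'" by blast
    qed
  qed
  have O'n: "w \<in> O' \<Longrightarrow> (T^^n) w = w" for w
  proof -
    assume "w \<in> O'"
    then obtain c where "c \<in> carrier G" "w = \<phi> c x" using O'mem by blast
    then show ?thesis using cxn by simp
  qed
  have inO': "z \<in> E \<Longrightarrow> z \<in> O' \<longleftrightarrow> orbit G \<phi> z = orbit G \<phi> x" for z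
    unfolding O'_def by (rule orbit_iff[OF x, symmetric])
  have TmO': "\<phi> c ((T^^j) x) \<in> O' \<longleftrightarrow> j mod m = 0" if c: "c \<in> carrier G" for c j
  proof -
    have e: "\<phi> c ((T^^j) x) \<in> E" using phiE[OF c TjE[OF x]] .
    have "\<phi> c ((T^^j) x) \<in> O' \<longleftrightarrow> orbit G \<phi> ((T^^j) x) = orbit G \<phi> ((T^^0) x)"
      using inO'[OF e] orbit_eq[OF TjE[OF x] c] by simp
    also have "\<dots> \<longleftrightarrow> j mod m = 0" using orbit_Tj[of j 0] by simp
    finally show ?thesis .
  qed
  have A_card: "card (T_orbit T (\<phi> c x) \<inter> O') = k" if c: "c \<in> carrier G" for c
  proof -
    have kpos: "k > 0" using nkm pi(1) by simp
    have eq: "T_orbit T (\<phi> c x) \<inter> O' = (\<lambda>i. \<phi> c ((T^^(i*m)) x)) ` {..<k}"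
    proof
      show "T_orbit T (\<phi> c x) \<inter> O' \<subseteq> (\<lambda>i. \<phi> c ((T^^(i*m)) x)) ` {..<k}"
      proof
        fix w assume w: "w \<in> T_orbit T (\<phi> c x) \<inter> O'"
        then obtain j where j0: "w = (T^^j) (\<phi> c x)" unfolding Tor by blast
        have j: "w = \<phi> c ((T^^j) x)" using j0 commj[OF c x] by simp
        have "j mod m = 0" using w j TmO'[OF c] by blast
        then have "m dvd j" by (simp add: mod_0_imp_dvd)
        then obtain q where "j = m*q" by (rule dvdE)
        then have q: "j = q*m" by simp
        have "(T^^j) x = (T^^(j mod n)) x" using pi(3) by simp
        also have "j mod n = (q mod k) * m" unfolding q nkm by (rule mod_mult_mult2)
        finally have "w = \<phi> c ((T^^((q mod k) * m)) x)" using j by simp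
        moreover have "q mod k < k" using kpos by simp
        ultimately show "w \<in> (\<lambda>i. \<phi> c ((T^^(i*m)) x)) ` {..<k}" by blast
      qed
    next
      show "(\<lambda>i. \<phi> c ((T^^(i*m)) x)) ` {..<k} \<subseteq> T_orbit T (\<phi> c x) \<inter> O'"
      proof
        fix w assume "w \<in> (\<lambda>i. \<phi> c ((T^^(i*m)) x)) ` {..<k}"
        then obtain i where i: "w = \<phi> c ((T^^(i*m)) x)" by blast
        have "w = (T^^(i*m)) (\<phi> c x)" using i commj[OF c x] by simp
        then have "w \<in> T_orbit T (\<phi> c x)" unfolding T_orbit_def by blast
        moreover have "w \<in> O'" using i TmO'[OF c, of "i*m"] by simp
        ultimately show "w \<in> T_orbit T (\<phi> c x) \<inter> O'" by blast
      qed
    qed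
    have inj: "inj_on (\<lambda>i. \<phi> c ((T^^(i*m)) x)) {..<k}"
    proof (rule inj_onI)
      fix i i' assume i: "i \<in> {..<k}" and i': "i' \<in> {..<k}"
        and e: "\<phi> c ((T^^(i*m)) x) = \<phi> c ((T^^(i'*m)) x)"
      have "(T^^(i*m)) x = (T^^(i'*m)) x"
        by (rule inj_onD[OF A.inj_prop[OF c] e TjE[OF x] TjE[OF x]])
      then have "(i*m) mod n = (i'*m) mod n" using pi(3) by simp
      moreover have "i*m < n" "i'*m < n" unfolding nkm using i i' m(1) by simp_all
      ultimately have "i*m = i'*m" by simp
      then show "i = i'" using m(1) by simp
    qed
    show ?thesis unfolding eq using card_image[OF inj] by simp
  qed
  have cardO'S: "card O' = card S * k"
  proof -
    have cover: "O' = (\<Union>Ob\<in>S. Ob \<inter> O')"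
    proof
      show "O' \<subseteq> (\<Union>Ob\<in>S. Ob \<inter> O')"
      proof
        fix w assume w: "w \<in> O'"
        have "w \<in> T_orbit T w" unfolding T_orbit_def by (auto intro: exI[of _ 0])
        then show "w \<in> (\<Union>Ob\<in>S. Ob \<inter> O')" using w S_eq by blast
      qed
    qed blast
    have disj: "\<forall>A\<in>S. \<forall>B\<in>S. A \<noteq> B \<longrightarrow> (A \<inter> O') \<inter> (B \<inter> O') = {}"
    proof (intro ballI impI)
      fix A B assume A: "A \<in> S" and B: "B \<in> S" and AB: "A \<noteq> B"
      obtain w1 where w1: "w1 \<in> O'" "A = T_orbit T w1" using A S_eq by blast
      obtain w2 where w2: "w2 \<in> O'" "B = T_orbit T w2" using B S_eq by blast
      show "(A \<inter> O') \<inter> (B \<inter> O') = {}"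
      proof (rule ccontr)
        assume "(A \<inter> O') \<inter> (B \<inter> O') \<noteq> {}"
        then obtain z where "z \<in> A" "z \<in> B" by blast
        then obtain a b where za: "z = (T^^a) w1" and zb: "z = (T^^b) w2" using w1 w2 unfolding Tor by blast
        have "A = T_orbit T z" unfolding za w1(2) using T_orbit_shift[OF pi(1) O'n[OF w1(1)]] by simp
        moreover have "B = T_orbit T z" unfolding zb w2(2) using T_orbit_shift[OF pi(1) O'n[OF w2(1)]] by simp
        ultimately show False using AB by simp
      qed
    qed
    have finS: "finite S" using S_eq finO' by simp
    have "card (\<Union>Ob\<in>S. Ob \<inter> O') = (\<Sum>Ob\<in>S. card (Ob \<inter> O'))"
      by (rule card_UN_disjoint[OF finS _ disj]) (use finO' in simp)
    moreover have "card O' = card (\<Union>Ob\<in>S. Ob \<inter> O')" by (rule arg_cong[OF cover])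
    ultimately have "card O' = (\<Sum>Ob\<in>S. card (Ob \<inter> O'))" by simp
    also have "\<dots> = (\<Sum>Ob\<in>S. k)"
    proof (rule sum.cong[OF refl])
      fix Ob assume "Ob \<in> S"
      then obtain w where w: "w \<in> O'" "Ob = T_orbit T w" unfolding S_eq by (rule imageE) simp
      from w(1) obtain c where c: "c \<in> carrier G" "w = \<phi> c x" unfolding O'mem by blast
      show "card (Ob \<inter> O') = k" unfolding w(2) c(2) by (rule A_card[OF c(1)])
    qed
    also have "\<dots> = card S * k" by simp
    finally show ?thesis .
  qed
  obtain g where g: "g \<in> carrier G" "stabilizer G \<phi> x = g <#\<^bsub>G\<^esub> H #>\<^bsub>G\<^esub> inv\<^bsub>G\<^esub> g"
    using stab by blast
  have Hsub: "H \<subseteq> carrier G" using H by (rule subgroup.subset)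
  have conjset: "\<And>u. u \<in> carrier G \<Longrightarrow> u <#\<^bsub>G\<^esub> H #>\<^bsub>G\<^esub> inv\<^bsub>G\<^esub> u = (\<lambda>y. u \<otimes>\<^bsub>G\<^esub> y \<otimes>\<^bsub>G\<^esub> inv\<^bsub>G\<^esub> u) ` H"
    unfolding l_coset_def r_coset_def by auto
  define K where "K = stabilizer G \<phi> x"
  have Kg: "K = (\<lambda>y. g \<otimes>\<^bsub>G\<^esub> y \<otimes>\<^bsub>G\<^esub> inv\<^bsub>G\<^esub> g) ` H" unfolding K_def g(2) by (rule conjset[OF g(1)])
  have injg: "inj_on (\<lambda>y. g \<otimes>\<^bsub>G\<^esub> y \<otimes>\<^bsub>G\<^esub> inv\<^bsub>G\<^esub> g) (carrier G)"
  proof (rule inj_onI)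
    fix u v assume u: "u \<in> carrier G" and v: "v \<in> carrier G"
      and e: "g \<otimes>\<^bsub>G\<^esub> u \<otimes>\<^bsub>G\<^esub> inv\<^bsub>G\<^esub> g = g \<otimes>\<^bsub>G\<^esub> v \<otimes>\<^bsub>G\<^esub> inv\<^bsub>G\<^esub> g"
    then show "u = v" using g(1) u v by simp
  qed
  have cardK: "card K = card H" unfolding Kg by (rule card_image[OF inj_on_subset[OF injg Hsub]])
  have cH: "u \<in> carrier G \<Longrightarrow> (u \<in> H \<longleftrightarrow> g \<otimes>\<^bsub>G\<^esub> u \<otimes>\<^bsub>G\<^esub> inv\<^bsub>G\<^esub> g \<in> K)" for u
    unfolding Kg using inj_on_image_mem_iff[OF injg _ Hsub] by simp
  have finH: "finite H" using fin Hsub finite_subset by blast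
  have Hpos: "card H > 0" using finH subgroup.one_closed[OF H] card_gt_0_iff by blast
  have "card O' * card H = order G" using A.orbit_stabilizer_theorem[OF x] cardK unfolding O'_def K_def by simp
  moreover have "card (rcosets\<^bsub>G\<^esub> H) * card H = order G" by (rule G.lagrange[OF H])
  ultimately have "card O' * card H = card (rcosets\<^bsub>G\<^esub> H) * card H" by simp
  then have cardR: "card O' = card (rcosets\<^bsub>G\<^esub> H)" using Hpos by simp
  have conj2: "card S * k = card (rcosets\<^bsub>G\<^esub> H)" using cardR cardO'S by simp
  obtain a where a: "a \<in> carrier G" "(T^^m) x = \<phi> a x" using m(2) unfolding P_def orbit_def by blast
  have apow: "\<phi> (a [^]\<^bsub>G\<^esub> j) x = (T^^(j*m)) x" for j
  proof (induction j)
    case 0 then show ?case using A.id_eq_one x by (metis G.nat_pow_0 funpow_0 mult_0 restrict_apply')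
  next
    case (Suc j)
    have "\<phi> (a [^]\<^bsub>G\<^esub> Suc j) x = \<phi> (a [^]\<^bsub>G\<^esub> j) (\<phi> a x)"
      using comp[OF G.nat_pow_closed[OF a(1)] a(1) x] by (simp add: G.nat_pow_Suc)
    also have "\<dots> = \<phi> (a [^]\<^bsub>G\<^esub> j) ((T^^m) x)" using a(2) by simp
    also have "\<dots> = (T^^m) (\<phi> (a [^]\<^bsub>G\<^esub> j) x)" using commj[OF G.nat_pow_closed[OF a(1)] x] by simp
    also have "\<dots> = (T^^(Suc j * m)) x" using Suc by (simp add: fpa add.commute)
    finally show ?case .
  qed
  have Kmem: "z \<in> K \<longleftrightarrow> z \<in> carrier G \<and> \<phi> z x = x" for z unfolding K_def stabilizer_def by simp
  have invE: "w \<in> E \<Longrightarrow> \<phi> (inv\<^bsub>G\<^esub> a) w = x \<longleftrightarrow> w = \<phi> a x" for w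
  proof
    assume w: "w \<in> E" and e: "\<phi> (inv\<^bsub>G\<^esub> a) w = x"
    have "\<phi> (inv\<^bsub>G\<^esub> (inv\<^bsub>G\<^esub> a)) (\<phi> (inv\<^bsub>G\<^esub> a) w) = w" using invact[OF G.inv_closed[OF a(1)] w] .
    then show "w = \<phi> a x" using e a(1) by simp
  next
    assume "w = \<phi> a x" then show "\<phi> (inv\<^bsub>G\<^esub> a) w = x" using invact[OF a(1) x] by simp
  qed
  have conjK: "z \<in> carrier G \<Longrightarrow> (z \<in> K \<longleftrightarrow> inv\<^bsub>G\<^esub> a \<otimes>\<^bsub>G\<^esub> z \<otimes>\<^bsub>G\<^esub> a \<in> K)" for z
  proof -
    assume z: "z \<in> carrier G"
    have "z \<in> K \<longleftrightarrow> \<phi> z ((T^^m) x) = (T^^m) x" using Kmem stabj[OF z] z by simp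
    also have "\<dots> \<longleftrightarrow> \<phi> z (\<phi> a x) = \<phi> a x" using a(2) by simp
    also have "\<dots> \<longleftrightarrow> \<phi> (inv\<^bsub>G\<^esub> a) (\<phi> z (\<phi> a x)) = x" using invE[OF phiE[OF z phiE[OF a(1) x]]] by simp
    also have "\<phi> (inv\<^bsub>G\<^esub> a) (\<phi> z (\<phi> a x)) = \<phi> (inv\<^bsub>G\<^esub> a \<otimes>\<^bsub>G\<^esub> z \<otimes>\<^bsub>G\<^esub> a) x"
      using comp[OF G.inv_closed[OF a(1)] z phiE[OF a(1) x]] comp[OF G.m_closed[OF G.inv_closed[OF a(1)] z] a(1) x]
        comp[OF G.inv_closed[OF a(1)] z] a(1) x by simp
    also have "(\<dots> = x) \<longleftrightarrow> inv\<^bsub>G\<^esub> a \<otimes>\<^bsub>G\<^esub> z \<otimes>\<^bsub>G\<^esub> a \<in> K" using Kmem a(1) z by simp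
    finally show ?thesis .
  qed
  have aK: "z \<in> carrier G \<Longrightarrow> (a \<otimes>\<^bsub>G\<^esub> z \<otimes>\<^bsub>G\<^esub> inv\<^bsub>G\<^esub> a \<in> K \<longleftrightarrow> z \<in> K)" for z
    using conjK[of "a \<otimes>\<^bsub>G\<^esub> z \<otimes>\<^bsub>G\<^esub> inv\<^bsub>G\<^esub> a"] G.conj_back[OF a(1)] a(1) by simp
  define h where "h = inv\<^bsub>G\<^esub> g \<otimes>\<^bsub>G\<^esub> a \<otimes>\<^bsub>G\<^esub> g"
  have hc: "h \<in> carrier G" unfolding h_def using a(1) g(1) by simp
  have hpowH: "h [^]\<^bsub>G\<^esub> j \<in> H \<longleftrightarrow> k dvd j" for j
  proof -
    have "h [^]\<^bsub>G\<^esub> j \<in> H \<longleftrightarrow> g \<otimes>\<^bsub>G\<^esub> (h [^]\<^bsub>G\<^esub> j) \<otimes>\<^bsub>G\<^esub> inv\<^bsub>G\<^esub> g \<in> K"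
      using cH[OF G.nat_pow_closed[OF hc]] .
    also have "g \<otimes>\<^bsub>G\<^esub> (h [^]\<^bsub>G\<^esub> j) \<otimes>\<^bsub>G\<^esub> inv\<^bsub>G\<^esub> g = a [^]\<^bsub>G\<^esub> j"
      unfolding h_def G.conj_pow[OF a(1) g(1)] using G.conj_pow2[OF G.nat_pow_closed[OF a(1)] g(1)] .
    also have "a [^]\<^bsub>G\<^esub> j \<in> K \<longleftrightarrow> (T^^(j*m)) x = (T^^0) x" using Kmem apow a(1) by simp
    also have "\<dots> \<longleftrightarrow> (j*m) mod n = 0 mod n" by (rule pi(3))
    also have "\<dots> \<longleftrightarrow> k dvd j" unfolding nkm using m(1) by (simp add: dvd_eq_mod_eq_0)
    finally show ?thesis .
  qed
  have hkey: "y \<in> carrier G \<Longrightarrow> (h \<otimes>\<^bsub>G\<^esub> y \<otimes>\<^bsub>G\<^esub> inv\<^bsub>G\<^esub> h \<in> H \<longleftrightarrow> y \<in> H)" for y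
  proof -
    assume y: "y \<in> carrier G"
    have "h \<otimes>\<^bsub>G\<^esub> y \<otimes>\<^bsub>G\<^esub> inv\<^bsub>G\<^esub> h \<in> H \<longleftrightarrow> g \<otimes>\<^bsub>G\<^esub> (h \<otimes>\<^bsub>G\<^esub> y \<otimes>\<^bsub>G\<^esub> inv\<^bsub>G\<^esub> h) \<otimes>\<^bsub>G\<^esub> inv\<^bsub>G\<^esub> g \<in> K"
      using cH hc y by simp
    also have "g \<otimes>\<^bsub>G\<^esub> (h \<otimes>\<^bsub>G\<^esub> y \<otimes>\<^bsub>G\<^esub> inv\<^bsub>G\<^esub> h) \<otimes>\<^bsub>G\<^esub> inv\<^bsub>G\<^esub> g = a \<otimes>\<^bsub>G\<^esub> (g \<otimes>\<^bsub>G\<^esub> y \<otimes>\<^bsub>G\<^esub> inv\<^bsub>G\<^esub> g) \<otimes>\<^bsub>G\<^esub> inv\<^bsub>G\<^esub> a"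
      unfolding h_def by (rule G.conj_conj[OF a(1) g(1) y])
    also have "\<dots> \<in> K \<longleftrightarrow> g \<otimes>\<^bsub>G\<^esub> y \<otimes>\<^bsub>G\<^esub> inv\<^bsub>G\<^esub> g \<in> K" using aK g(1) y by simp
    also have "\<dots> \<longleftrightarrow> y \<in> H" using cH[OF y] by simp
    finally show ?thesis .
  qed
  have hN: "h \<in> normalizer G H"
  proof -
    have "h <#\<^bsub>G\<^esub> H #>\<^bsub>G\<^esub> inv\<^bsub>G\<^esub> h = H"
    proof -
      have "(\<lambda>y. h \<otimes>\<^bsub>G\<^esub> y \<otimes>\<^bsub>G\<^esub> inv\<^bsub>G\<^esub> h) ` H = H"
      proof
        show "(\<lambda>y. h \<otimes>\<^bsub>G\<^esub> y \<otimes>\<^bsub>G\<^esub> inv\<^bsub>G\<^esub> h) ` H \<subseteq> H" using hkey Hsub by blast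
        show "H \<subseteq> (\<lambda>y. h \<otimes>\<^bsub>G\<^esub> y \<otimes>\<^bsub>G\<^esub> inv\<^bsub>G\<^esub> h) ` H"
        proof
          fix y assume yH: "y \<in> H"
          have y: "y \<in> carrier G" using yH Hsub by blast
          have yy: "y = h \<otimes>\<^bsub>G\<^esub> (inv\<^bsub>G\<^esub> h \<otimes>\<^bsub>G\<^esub> y \<otimes>\<^bsub>G\<^esub> h) \<otimes>\<^bsub>G\<^esub> inv\<^bsub>G\<^esub> h"
            using G.conj_back2[OF hc y] by simp
          have "inv\<^bsub>G\<^esub> h \<otimes>\<^bsub>G\<^esub> y \<otimes>\<^bsub>G\<^esub> h \<in> H"
            using hkey[of "inv\<^bsub>G\<^esub> h \<otimes>\<^bsub>G\<^esub> y \<otimes>\<^bsub>G\<^esub> h"] yy yH hc y by simp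
          then show "y \<in> (\<lambda>y. h \<otimes>\<^bsub>G\<^esub> y \<otimes>\<^bsub>G\<^esub> inv\<^bsub>G\<^esub> h) ` H" using yy by blast
        qed
      qed
      then show ?thesis using conjset[OF hc] by simp
    qed
    then show ?thesis unfolding normalizer_def stabilizer_def using hc Hsub by simp
  qed
  define N where "N = G\<lparr>carrier := normalizer G H\<rparr>"
  have nrm: "normal H N" unfolding N_def by (rule G.subgroup_in_normalizer[OF H])
  have grpQ: "group (N Mod H)" by (rule normal.factorgroup_is_group[OF nrm])
  define e where "e = H #>\<^bsub>N\<^esub> h"
  have eC: "e \<in> carrier (N Mod H)" unfolding e_def carrier_FactGroup using hN N_def by simp
  have rcN: "H #>\<^bsub>N\<^esub> u = H #>\<^bsub>G\<^esub> u" for u unfolding N_def r_coset_def by simp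
  have powN: "u [^]\<^bsub>N\<^esub> (j::nat) = u [^]\<^bsub>G\<^esub> j" for u j unfolding N_def nat_pow_def by simp
  have epow: "e [^]\<^bsub>N Mod H\<^esub> j = H \<longleftrightarrow> k dvd j" for j
  proof -
    have "e [^]\<^bsub>N Mod H\<^esub> j = H #>\<^bsub>N\<^esub> (h [^]\<^bsub>N\<^esub> j)"
      unfolding e_def by (rule normal.FactGroup_pow[OF nrm]) (simp add: N_def hN)
    also have "\<dots> = H #>\<^bsub>G\<^esub> (h [^]\<^bsub>G\<^esub> j)" using rcN powN by simp
    finally have ej: "e [^]\<^bsub>N Mod H\<^esub> j = H #>\<^bsub>G\<^esub> (h [^]\<^bsub>G\<^esub> j)" .
    have hjc: "h [^]\<^bsub>G\<^esub> j \<in> carrier G" using hc by simp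
    have "H #>\<^bsub>G\<^esub> (h [^]\<^bsub>G\<^esub> j) = H \<longleftrightarrow> h [^]\<^bsub>G\<^esub> j \<in> H"
    proof
      assume "H #>\<^bsub>G\<^esub> (h [^]\<^bsub>G\<^esub> j) = H"
      then show "h [^]\<^bsub>G\<^esub> j \<in> H" using G.rcos_self[OF hjc H] by simp
    next
      assume "h [^]\<^bsub>G\<^esub> j \<in> H"
      then show "H #>\<^bsub>G\<^esub> (h [^]\<^bsub>G\<^esub> j) = H" by (rule subgroup.rcos_const[OF H G.is_group])
    qed
    then show ?thesis using ej hpowH by simp
  qed
  have "group.ord (N Mod H) e = k"
    using group.ord_unique[OF grpQ eC] epow by simp
  then have kD: "k \<in> Delta ((G\<lparr>carrier := normalizer G H\<rparr>) Mod H)"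
    unfolding Delta_def N_def[symmetric] using eC by blast
  show ?thesis using kD conj1 conj2 unfolding S_def by blast
qed
end
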